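(* Let $p=\phi(n)/n$, where $\phi$ is a function with $\phi(n)=o(n)$ and $\phi(n)\to\infty$ as $n\to\infty$. Then the average complexity $\mathbb{T}(n,p)$ of exhaustive search for maximum independent set on $G\sim\mathcal{G}(n,p)$ is subexponential in $n$ and satisfies $$\mathbb{T}(n,p)=O\left(\exp\left(n\cdot\frac{2\ln\phi(n)+\ln^2\phi(n)}{2\phi(n)}\right)\right).$$
   Context: $\mathcal{G}(n,p)$ is the binomial random graph on $n$ vertices in which each of the $\binom{n}{2}$ pairs of vertices is an edge with probability $p$, independently. Exhaustive search processes the vertices in a fixed order $v_1,\dots,v_n$ and builds a binary search tree: a node at level $i$ corresponds to a subset $P\subseteq\{v_1,\dots,v_i\}$, and it has the two children $P\cup\{v_{i+1}\}$ and $P$ at level $i+1$; a node is kept (and expanded) only if its subset is an independent set of $G$. $\mathbb{T}(n,p)$ denotes the expected number of nodes of this search tree when $G\sim\mathcal{G}(n,p)$. *)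

theory Defs
  imports "HOL-Probability.Probability" "HOL-Library.Landau_Symbols"
begin

text \<open>Vertices v_1,...,v_n are represented by 0,...,n-1 (v_(i+1) = i).
  A graph on these vertices is given by its edge indicator on pairs (i,j) with i < j < n.\<close>

definition vpairs :: "nat \<Rightarrow> (nat \<times> nat) set" where
  "vpairs n = {(i,j). i < j \<and> j < n}"

definition gnp :: "nat \<Rightarrow> real \<Rightarrow> (nat \<times> nat \<Rightarrow> bool) pmf" where
  "gnp n p = Pi_pmf (vpairs n) False (\<lambda>_. bernoulli_pmf p)"

definition indep_set :: "(nat \<times> nat \<Rightarrow> bool) \<Rightarrow> nat set \<Rightarrow> bool" where
  "indep_set G P \<longleftrightarrow> (\<forall>i\<in>P. \<forall>j\<in>P. i < j \<longrightarrow> \<not> G (i,j))"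

text \<open>Nodes of the exhaustive search tree: a node at level i (0 \<le> i \<le> n) is a subset
  P of {v_1,...,v_i} = {0..<i}; it is present iff P is independent
  (independence is hereditary, so every independent P at level i is reached from the root).\<close>
definition search_tree_nodes :: "nat \<Rightarrow> (nat \<times> nat \<Rightarrow> bool) \<Rightarrow> (nat \<times> nat set) set" where
  "search_tree_nodes n G = {(i, P). i \<le> n \<and> P \<subseteq> {0..<i} \<and> indep_set G P}"

definition T_avg :: "nat \<Rightarrow> real \<Rightarrow> real" where
  "T_avg n p = measure_pmf.expectation (gnp n p) (\<lambda>G. real (card (search_tree_nodes n G)))"

end

theory Submission imports Defs "HOL-Real_Asymp.Real_Asymp" begin

definition prs :: "nat set \<Rightarrow> (nat \<times> nat) set" where
  "prs P = {(i,j). i \<in> P \<and> j \<in> P \<and> i < j}"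

lemma prob_indep:
  assumes p: "0 \<le> p" "p \<le> 1" and P: "P \<subseteq> {0..<n}"
  shows "measure_pmf.prob (gnp n p) {G. indep_set G P} = (1-p) ^ card (prs P)"
proof -
  have fin: "finite (vpairs n)"
    by (rule finite_subset[of _ "{0..<n} \<times> {0..<n}"]) (auto simp: vpairs_def)
  have sub: "prs P \<subseteq> vpairs n" using P by (auto simp: prs_def vpairs_def)
  define B where "B = (\<lambda>e. if e \<in> prs P then {False} else (UNIV :: bool set))"
  have eq: "{G. indep_set G P} = Pi (vpairs n) B"
    using sub by (auto simp: indep_set_def B_def Pi_def prs_def split: if_splits)
  have "measure_pmf.prob (gnp n p) {G. indep_set G P} = (\<Prod>e\<in>vpairs n. measure_pmf.prob (bernoulli_pmf p) (B e))"
    unfolding gnp_def eq by (rule measure_Pi_pmf_Pi[OF fin])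
  also have "\<dots> = (\<Prod>e\<in>vpairs n. if e \<in> prs P then 1 - p else 1)"
    by (intro prod.cong refl) (auto simp: B_def measure_pmf_single p)
  also have "\<dots> = (1-p) ^ card (prs P)"
    using fin sub by (simp add: prod.If_cases Int_absorb1)
  finally show ?thesis .
qed

lemma card_prs: assumes "finite P" shows "card (prs P) = card P choose 2"
proof -
  have "bij_betw (\<lambda>(i,j). {i,j}) (prs P) {B. B \<subseteq> P \<and> card B = 2}"
  proof (rule bij_betwI')
    fix x y assume "x \<in> prs P" "y \<in> prs P"
    then show "((case x of (i, j) \<Rightarrow> {i, j}) = (case y of (i, j) \<Rightarrow> {i, j})) = (x = y)"
      by (auto simp: prs_def doubleton_eq_iff)
  next
    fix x assume "x \<in> prs P" then show "(case x of (i, j) \<Rightarrow> {i, j}) \<in> {B. B \<subseteq> P \<and> card B = 2}"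
      by (auto simp: prs_def)
  next
    fix B assume "B \<in> {B. B \<subseteq> P \<and> card B = 2}"
    then obtain x y where "x \<noteq> y" "B = {x,y}" "x \<in> P" "y \<in> P" by (auto simp: card_2_iff)
    then show "\<exists>x\<in>prs P. B = (case x of (i, j) \<Rightarrow> {i, j})"
    proof (cases "x < y")
      case True then show ?thesis using \<open>B = {x,y}\<close> \<open>x \<in> P\<close> \<open>y \<in> P\<close> by (auto simp: prs_def)
    next
      case False then have "y < x" using \<open>x \<noteq> y\<close> by simp
      then show ?thesis using \<open>B = {x,y}\<close> \<open>x \<in> P\<close> \<open>y \<in> P\<close> by (auto simp: prs_def)
    qed
  qed
  then have "card (prs P) = card {B. B \<subseteq> P \<and> card B = 2}" by (rule bij_betw_same_card)
  also have "\<dots> = card P choose 2" using assms by (rule n_subsets)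
  finally show ?thesis .
qed

lemma fin_gnp: "finite (set_pmf (gnp n p))"
proof -
  have fin: "finite (vpairs n)"
    by (rule finite_subset[of _ "{0..<n} \<times> {0..<n}"]) (auto simp: vpairs_def)
  show ?thesis unfolding gnp_def using fin by (auto simp: set_Pi_pmf)
qed

lemma term_bound:
  fixes p L :: real and k :: nat
  assumes "0 < p" "p \<le> 1"
  shows "(1-p) ^ (k choose 2) \<le> exp ((L+1/2)^2/(2*p)) * exp (-L) ^ k"
proof -
  have "(1-p) ^ (k choose 2) \<le> exp (-p) ^ (k choose 2)"
    using assms by (intro power_mono) (auto simp: exp_ge_add_one_self[of "-p", simplified] )
  also have "\<dots> = exp (- p * real (k choose 2))"
    by (simp add: exp_of_nat_mult[symmetric] mult.commute)
  also have "real (k choose 2) = real k * (real k - 1) / 2"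
    by (cases k) (auto simp: choose_two real_of_nat_div algebra_simps)
  also have "exp (- p * (real k * (real k - 1) / 2)) \<le> exp ((L+1/2)^2/(2*p) - real k * L)"
  proof -
    define y where "y = p * real k"
    have y0: "y \<ge> 0" using assms by (simp add: y_def)
    have "p * y \<le> y" using assms y0 by (simp add: mult_left_le_one_le)
    moreover have "0 \<le> (y - (L+1/2))^2" by simp
    ultimately have "p*y - y^2 \<le> (L+1/2)^2 - 2*y*L"
      by (simp add: power2_eq_square algebra_simps)
    moreover have "(- p * (real k * (real k - 1) / 2)) * (2*p) = p*y - y^2"
      by (simp add: y_def power2_eq_square field_simps)
    moreover have "((L+1/2)^2/(2*p) - real k * L) * (2*p) = (L+1/2)^2 - 2*y*L"
      using assms by (simp add: y_def field_simps)
    ultimately have "(- p * (real k * (real k - 1) / 2)) * (2*p) \<le> ((L+1/2)^2/(2*p) - real k * L) * (2*p)"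
      by linarith
    from mult_right_le_imp_le[OF this] have "- p * (real k * (real k - 1) / 2) \<le> (L+1/2)^2/(2*p) - real k * L"
      using assms by simp
    then show ?thesis by simp
  qed
  also have "\<dots> = exp ((L+1/2)^2/(2*p)) * exp (-L) ^ k"
    by (simp add: exp_diff exp_minus exp_of_nat_mult[symmetric] field_simps)
  finally show ?thesis .
qed

lemma sum_pow_card: "(\<Sum>X\<in>Pow {0..<n}. (r::real) ^ card X) = (1 + r) ^ n"
proof -
  have "(\<Prod>x\<in>{0..<n}. r + 1) = (\<Sum>X\<in>Pow {0..<n}. (\<Prod>x\<in>X. r) * (\<Prod>x\<in>{0..<n}-X. 1))"
    by (rule prod_add) simp
  then show ?thesis by (simp add: add.commute)
qed

lemma T_upper:
  fixes p L :: real
  assumes p: "0 < p" "p \<le> 1"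
  shows "T_avg n p \<le> real (n+1) * (exp ((L+1/2)^2/(2*p)) * (1 + exp (-L)) ^ n)"
proof -
  let ?M = "gnp n p"
  let ?A = "Pow {0..<n}"
  define f where "f = (\<lambda>G. real (n+1) * (\<Sum>P\<in>?A. indicator {G. indep_set G P} G :: real))"
  have int: "integrable (measure_pmf ?M) h" for h :: "_ \<Rightarrow> real"
    by (rule integrable_measure_pmf_finite[OF fin_gnp])
  have le: "real (card (search_tree_nodes n G)) \<le> f G" for G
  proof -
    have "search_tree_nodes n G \<subseteq> {0..n} \<times> {P\<in>?A. indep_set G P}"
      by (auto simp: search_tree_nodes_def)
    then have "card (search_tree_nodes n G) \<le> card ({0..n} \<times> {P\<in>?A. indep_set G P})"
      by (intro card_mono) auto
    also have "\<dots> = (n+1) * card {P\<in>?A. indep_set G P}"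
      by (simp add: card_cartesian_product)
    finally have "real (card (search_tree_nodes n G)) \<le> real (n+1) * real (card {P\<in>?A. indep_set G P})"
      by (metis of_nat_le_iff of_nat_mult)
    also have "real (card {P\<in>?A. indep_set G P}) = (\<Sum>P\<in>?A. indicator {G. indep_set G P} G)"
      by (simp add: indicator_def sum.If_cases Int_def)
    finally show ?thesis by (simp add: f_def)
  qed
  have "T_avg n p \<le> measure_pmf.expectation ?M f"
    unfolding T_avg_def by (intro integral_mono int le)
  also have "\<dots> = real (n+1) * (\<Sum>P\<in>?A. measure_pmf.prob ?M {G. indep_set G P})"
    unfolding f_def by (simp add: integral_sum int)
  also have "(\<Sum>P\<in>?A. measure_pmf.prob ?M {G. indep_set G P}) = (\<Sum>P\<in>?A. (1-p) ^ (card P choose 2))"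
  proof (intro sum.cong refl)
    fix P assume "P \<in> ?A"
    then have "P \<subseteq> {0..<n}" "finite P" by (auto intro: finite_subset)
    then show "measure_pmf.prob ?M {G. indep_set G P} = (1-p) ^ (card P choose 2)"
      using p by (simp add: prob_indep card_prs)
  qed
  also have "\<dots> \<le> (\<Sum>P\<in>?A. exp ((L+1/2)^2/(2*p)) * exp (-L) ^ card P)"
    by (intro sum_mono term_bound p)
  also have "\<dots> = exp ((L+1/2)^2/(2*p)) * (1 + exp (-L)) ^ n"
    by (simp add: sum_distrib_left[symmetric] sum_pow_card)
  finally show ?thesis by (simp add: mult_left_mono)
qed

lemma T_lower: "1 \<le> T_avg n p"
proof -
  have "measure_pmf.expectation (gnp n p) (\<lambda>_. 1::real) \<le> T_avg n p"
    unfolding T_avg_def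
  proof (intro integral_mono integrable_measure_pmf_finite[OF fin_gnp])
    fix G
    have "(0, {}) \<in> search_tree_nodes n G" by (simp add: search_tree_nodes_def indep_set_def)
    moreover have "finite (search_tree_nodes n G)"
      by (rule finite_subset[of _ "{0..n} \<times> Pow {0..<n}"]) (auto simp: search_tree_nodes_def)
    ultimately have "card (search_tree_nodes n G) \<ge> 1"
      by (metis One_nat_def Suc_leI card_gt_0_iff empty_iff)
    then show "1 \<le> real (card (search_tree_nodes n G))" by simp
  qed
  then show ?thesis by simp
qed

lemma pointwise:
  fixes f :: real and n :: nat
  assumes f5: "exp 5 \<le> f" and w16: "16 \<le> n / f" and lnw: "ln (n / f) \<le> (n / f) / 2"
  shows "T_avg n (f / n) \<le> exp (real n * ((2 * ln f + (ln f)\<^sup>2) / (2 * f)))"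
proof -
  define L where "L = ln f"
  define w where "w = n / f"
  have fpos: "0 < f" using f5 by (meson exp_gt_zero less_le_trans)
  have L5: "5 \<le> L" unfolding L_def using f5 fpos by (metis ln_exp ln_le_cancel_iff exp_gt_zero)
  have npos: "0 < real n" using w16 fpos by (auto simp: w_def divide_simps split: if_splits)
  have p0: "0 < f / n" using fpos npos by simp
  have p1: "f / n \<le> 1" using w16 fpos npos by (simp add: field_simps)
  have wpos: "0 < w" using fpos npos by (simp add: w_def)
  have "T_avg n (f/n) \<le> real (n+1) * (exp ((L+1/2)^2/(2*(f/n))) * (1 + exp (-L)) ^ n)"
    by (rule T_upper[OF p0 p1])
  also have "exp (-L) = 1 / f" unfolding L_def using fpos by (simp add: exp_minus divide_inverse)
  also have "(1 + 1/f) ^ n \<le> exp (1/f) ^ n"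
    by (intro power_mono) (use fpos exp_ge_add_one_self[of "1/f"] in \<open>auto simp: add.commute\<close>)
  also have "exp (1/f) ^ n = exp w"
    by (simp add: exp_of_nat_mult[symmetric] w_def)
  also have "(L+1/2)^2/(2*(f/n)) = w * (L+1/2)^2/2"
    using fpos npos by (simp add: w_def field_simps)
  also have "real (n+1) = exp (ln (real n + 1))" using npos by simp
  finally have T1: "T_avg n (f/n) \<le> exp (ln (real n + 1) + (w * (L+1/2)^2/2 + w))"
    using npos by (simp add: exp_add mult_left_mono mult.assoc)
  have "ln (real n + 1) \<le> ln (2 * real n)" using npos by simp
  also have "2 * real n = 2 * (w * f)" using fpos by (simp add: w_def)
  also have "ln (2 * (w * f)) = ln 2 + ln w + L" using fpos wpos by (simp add: L_def ln_mult)
  also have "ln (2::real) \<le> 1" using ln_le_minus_one[of 2] by simp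
  finally have ln1: "ln (real n + 1) \<le> 1 + ln w + L" by simp
  have w16': "16 \<le> w" using w16 by (simp add: w_def)
  have lnw': "ln w \<le> w / 2" using lnw by (simp add: w_def)
  have "0 \<le> (w - 16) * (L/2 - 13/8)" using w16' L5 by (intro mult_nonneg_nonneg) auto
  moreover have "(w - 16) * (L/2 - 13/8) = L*w/2 - 13*w/8 - 8*L + 26" by (simp add: field_simps)
  ultimately have "0 \<le> L*w/2 - 13*w/8 - 8*L + 26" by simp
  then have k1: "ln (real n + 1) + 9*w/8 \<le> L*w/2" using ln1 lnw' L5 by linarith
  have e1: "w * (L+1/2)^2/2 + w = w*L^2/2 + L*w/2 + 9*w/8" by (simp add: power2_eq_square field_simps)
  have e2: "w * (L + L^2/2) = L*w + w*L^2/2" by (simp add: field_simps)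
  have key: "ln (real n + 1) + (w * (L+1/2)^2/2 + w) \<le> w * (L + L^2/2)"
    unfolding e1 e2 using k1 by linarith
  have "w * (L + L^2/2) = real n * ((2 * ln f + (ln f)\<^sup>2) / (2 * f))"
    using fpos by (simp add: w_def L_def field_simps)
  with T1 key show ?thesis by (metis exp_le_cancel_iff order.trans)
qed

theorem lemma2:
  fixes \<phi> :: "nat \<Rightarrow> real"
  assumes "\<phi> \<in> o(\<lambda>n. real n)"
    and "filterlim \<phi> at_top sequentially"
  shows "(\<lambda>n. ln (T_avg n (\<phi> n / real n))) \<in> o(\<lambda>n. real n) \<and>
         (\<lambda>n. T_avg n (\<phi> n / real n)) \<in>
           O(\<lambda>n. exp (real n * ((2 * ln (\<phi> n) + (ln (\<phi> n))\<^sup>2) / (2 * \<phi> n))))"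
proof -
  define h where "h = (\<lambda>x::real. (2 * ln x + (ln x)\<^sup>2) / (2 * x))"
  have ev5: "eventually (\<lambda>n. exp 5 \<le> \<phi> n) sequentially"
    using assms(2) by (simp add: filterlim_at_top)
  have ratio: "((\<lambda>n. \<phi> n / real n) \<longlongrightarrow> 0) sequentially"
    by (rule smalloD_tendsto[OF assms(1)])
  have pos: "eventually (\<lambda>n. 0 < \<phi> n / real n) sequentially"
    using ev5 eventually_gt_at_top[of 0]
    by eventually_elim (auto intro: divide_pos_pos less_le_trans[OF exp_gt_zero])
  have winf: "filterlim (\<lambda>n. inverse (\<phi> n / real n)) at_top sequentially"
    by (rule filterlim_inverse_at_top[OF ratio pos])
  have a1: "eventually (\<lambda>x::real. 16 \<le> x) at_top" by real_asymp
  have a2: "eventually (\<lambda>x::real. ln x \<le> x / 2) at_top" by real_asymp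
  have aw: "eventually (\<lambda>x::real. 16 \<le> x \<and> ln x \<le> x / 2) at_top" using eventually_conj[OF a1 a2] .
  have ev_w: "eventually (\<lambda>n. 16 \<le> real n / \<phi> n \<and> ln (real n / \<phi> n) \<le> (real n / \<phi> n) / 2) sequentially"
    using filterlim_iff[THEN iffD1, OF winf, rule_format, OF aw] by (simp only: inverse_divide)
  have evT: "eventually (\<lambda>n. 1 \<le> T_avg n (\<phi> n / real n) \<and>
       T_avg n (\<phi> n / real n) \<le> exp (real n * h (\<phi> n))) sequentially"
    using ev5 ev_w
  proof eventually_elim
    case (elim n)
    have "T_avg n (\<phi> n / real n) \<le> exp (real n * h (\<phi> n))"
      unfolding h_def using elim by (intro pointwise) auto
    then show ?case using T_lower by blast
  qed
  have big: "(\<lambda>n. T_avg n (\<phi> n / real n)) \<in> O(\<lambda>n. exp (real n * h (\<phi> n)))"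
  proof (rule bigoI[of _ 1])
    show "eventually (\<lambda>n. norm (T_avg n (\<phi> n / real n)) \<le> 1 * norm (exp (real n * h (\<phi> n)))) sequentially"
      using evT
    proof eventually_elim
      case (elim n)
      then show ?case by (simp only: real_norm_def abs_of_pos[OF exp_gt_zero] mult_1 abs_of_nonneg[of "T_avg n (\<phi> n / real n)"]) linarith
    qed
  qed
  have hlim: "filterlim h (nhds 0) at_top" unfolding h_def by real_asymp
  have hphi: "((\<lambda>n. h (\<phi> n)) \<longlongrightarrow> 0) sequentially"
    by (rule filterlim_compose[OF hlim assms(2)])
  have small1: "(\<lambda>n. real n * h (\<phi> n)) \<in> o(\<lambda>n. real n)"
  proof (rule smalloI_tendsto)
    show "((\<lambda>n. real n * h (\<phi> n) / real n) \<longlongrightarrow> 0) sequentially"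
      using hphi by (rule Lim_transform_eventually) (use eventually_gt_at_top[of 0] in \<open>eventually_elim, simp\<close>)
    show "eventually (\<lambda>n. real n \<noteq> 0) sequentially"
      using eventually_gt_at_top[of 0] by eventually_elim simp
  qed
  have big2: "(\<lambda>n. ln (T_avg n (\<phi> n / real n))) \<in> O(\<lambda>n. real n * h (\<phi> n))"
  proof (rule bigoI[of _ 1])
    show "eventually (\<lambda>n. norm (ln (T_avg n (\<phi> n / real n))) \<le> 1 * norm (real n * h (\<phi> n))) sequentially"
      using evT
    proof eventually_elim
      case (elim n)
      then have a: "0 \<le> ln (T_avg n (\<phi> n / real n))" by (intro ln_ge_zero) blast
      have "ln (T_avg n (\<phi> n / real n)) \<le> ln (exp (real n * h (\<phi> n)))"
        using elim by (intro ln_mono) auto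
      then have b: "ln (T_avg n (\<phi> n / real n)) \<le> real n * h (\<phi> n)" by (simp only: ln_exp)
      show ?case using a b by (simp only: real_norm_def mult_1 abs_of_nonneg[OF a])
    qed
  qed
  have "(\<lambda>n. ln (T_avg n (\<phi> n / real n))) \<in> o(\<lambda>n. real n)"
    by (rule landau_o.big_small_trans[OF big2 small1])
  then show ?thesis using big unfolding h_def by blast
qed

end
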